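(* If $X$ is a GO-space and $E$ is a countable metrizable space, then $E\times X$ is $C$-selective.
   Context: All spaces are assumed $T_1$. A GO-space (generalized ordered space) is a linearly ordered set with a topology finer than the order topology that has a base of order-convex sets. For spaces $Y$, $X$, a map $\varphi:Y\to\mathcal P(X)\setminus\{\emptyset\}$ is lower semicontinuous (l.s.c.) if $\{y:\varphi(y)\cap U\neq\emptyset\}$ is open in $Y$ for every open $U\subseteq X$; a selection is a map $f:Y\to X$ with $f(y)\in\varphi(y)$ for all $y$. $X$ is $Y$-selective if every l.s.c. map from $Y$ to the nonempty closed subsets of $X$ has a continuous selection; $X$ is $C$-selective if it is $Y$-selective for every countable regular space $Y$. *)

theory Defs
  imports "HOL-Analysis.Analysis"
begin

definition order_convex_in :: "'a::linorder set \<Rightarrow> 'a set \<Rightarrow> bool" where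
  "order_convex_in S V \<longleftrightarrow> V \<subseteq> S \<and>
     (\<forall>a\<in>V. \<forall>b\<in>V. \<forall>c\<in>S. a \<le> c \<and> c \<le> b \<longrightarrow> c \<in> V)"

text \<open>T1 is part of the standing convention.\<close>
definition GO_space :: "'a::linorder topology \<Rightarrow> bool" where
  "GO_space X \<longleftrightarrow> t1_space X \<and>
     (\<forall>a\<in>topspace X. openin X {x\<in>topspace X. x < a} \<and> openin X {x\<in>topspace X. a < x}) \<and>
     (\<forall>U x. openin X U \<and> x \<in> U \<longrightarrow>
        (\<exists>V. openin X V \<and> order_convex_in (topspace X) V \<and> x \<in> V \<and> V \<subseteq> U))"

definition lsc_closed_valued :: "'b topology \<Rightarrow> 'c topology \<Rightarrow> ('b \<Rightarrow> 'c set) \<Rightarrow> bool" where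
  "lsc_closed_valued Y X \<phi> \<longleftrightarrow>
     (\<forall>y\<in>topspace Y. \<phi> y \<noteq> {} \<and> closedin X (\<phi> y)) \<and>
     (\<forall>U. openin X U \<longrightarrow> openin Y {y\<in>topspace Y. \<phi> y \<inter> U \<noteq> {}})"

definition Y_selective :: "'b topology \<Rightarrow> 'c topology \<Rightarrow> bool" where
  "Y_selective Y X \<longleftrightarrow>
     (\<forall>\<phi>. lsc_closed_valued Y X \<phi> \<longrightarrow>
        (\<exists>f. continuous_map Y X f \<and> (\<forall>y\<in>topspace Y. f y \<in> \<phi> y)))"

text \<open>Every countable
  space is homeomorphic to a space whose carrier is a subset of nat, and Y-selectivity is
  invariant under homeomorphism, so we quantify over topologies on nat.\<close>
definition C_selective :: "'c topology \<Rightarrow> bool" where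
  "C_selective X \<longleftrightarrow>
     (\<forall>Y :: nat topology. countable (topspace Y) \<and> regular_space Y \<and> t1_space Y
        \<longrightarrow> Y_selective Y X)"

end

theory Submission
  imports Defs
begin

definition lbad :: "'a::linorder topology \<Rightarrow> 'a \<Rightarrow> bool" where
  "lbad X t \<longleftrightarrow> (\<forall>A. countable A \<and> A \<subseteq> {a\<in>topspace X. a < t} \<longrightarrow> (\<exists>b\<in>topspace X. b < t \<and> (\<forall>a\<in>A. a \<le> b)))"
definition rbad :: "'a::linorder topology \<Rightarrow> 'a \<Rightarrow> bool" where
  "rbad X t \<longleftrightarrow> (\<forall>A. countable A \<and> A \<subseteq> {a\<in>topspace X. t < a} \<longrightarrow> (\<exists>b\<in>topspace X. t < b \<and> (\<forall>a\<in>A. b \<le> a)))"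
definition Sset :: "'a::linorder topology \<Rightarrow> 'a \<Rightarrow> 'a set" where
  "Sset X t = {s\<in>topspace X. (s < t \<longrightarrow> \<not> lbad X t) \<and> (t < s \<longrightarrow> \<not> rbad X t)}"
definition Xopen :: "'a::linorder topology \<Rightarrow> 'a set \<Rightarrow> bool" where
  "Xopen X W \<longleftrightarrow> W \<subseteq> topspace X \<and> (\<forall>t\<in>W. \<exists>V. openin X V \<and> t \<in> V \<and> V \<inter> Sset X t \<subseteq> W)"
definition Xp :: "'a::linorder topology \<Rightarrow> 'a topology" where
  "Xp X = topology (Xopen X)"

lemma XopenD: "Xopen X W \<Longrightarrow> t \<in> W \<Longrightarrow> \<exists>V. openin X V \<and> t \<in> V \<and> V \<inter> Sset X t \<subseteq> W"
  unfolding Xopen_def by (elim conjE) (rule bspec)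

lemma XopenD2: "Xopen X W \<Longrightarrow> W \<subseteq> topspace X"
  unfolding Xopen_def by (elim conjE)

lemma XopenI: "W \<subseteq> topspace X \<Longrightarrow> (\<And>t. t \<in> W \<Longrightarrow> \<exists>V. openin X V \<and> t \<in> V \<and> V \<inter> Sset X t \<subseteq> W) \<Longrightarrow> Xopen X W"
  unfolding Xopen_def by (intro conjI ballI)

lemma Xopen_Int: "Xopen X S \<Longrightarrow> Xopen X T \<Longrightarrow> Xopen X (S \<inter> T)"
proof (rule XopenI)
  assume S: "Xopen X S" and T: "Xopen X T"
  show "S \<inter> T \<subseteq> topspace X" using XopenD2[OF S] by (rule le_infI1)
  fix t assume t: "t \<in> S \<inter> T"
  obtain V1 where V1: "openin X V1" "t \<in> V1" "V1 \<inter> Sset X t \<subseteq> S" using XopenD[OF S] t by blast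
  obtain V2 where V2: "openin X V2" "t \<in> V2" "V2 \<inter> Sset X t \<subseteq> T" using XopenD[OF T] t by blast
  show "\<exists>V. openin X V \<and> t \<in> V \<and> V \<inter> Sset X t \<subseteq> S \<inter> T"
  proof (rule exI[of _ "V1 \<inter> V2"], intro conjI)
    show "openin X (V1 \<inter> V2)" using V1(1) V2(1) by (rule openin_Int)
    show "t \<in> V1 \<inter> V2" using V1(2) V2(2) by (rule IntI)
    show "V1 \<inter> V2 \<inter> Sset X t \<subseteq> S \<inter> T" using V1(3) V2(3) by blast
  qed
qed

lemma Xopen_Union: "(\<And>S. S \<in> K \<Longrightarrow> Xopen X S) \<Longrightarrow> Xopen X (\<Union>K)"
proof (rule XopenI)
  assume K: "\<And>S. S \<in> K \<Longrightarrow> Xopen X S"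
  show "\<Union>K \<subseteq> topspace X" using K XopenD2 by blast
  fix t assume "t \<in> \<Union>K"
  then obtain S where S: "S \<in> K" "t \<in> S" by blast
  obtain V where V: "openin X V" "t \<in> V" "V \<inter> Sset X t \<subseteq> S" using XopenD[OF K[OF S(1)] S(2)] by blast
  have "V \<inter> Sset X t \<subseteq> \<Union>K" using V(3) S(1) by blast
  then show "\<exists>V. openin X V \<and> t \<in> V \<and> V \<inter> Sset X t \<subseteq> \<Union>K" using V(1,2) by blast
qed

lemma istopology_Xopen: "istopology (Xopen X)"
  unfolding istopology_def using Xopen_Int Xopen_Union by blast

lemma openin_Xp: "openin (Xp X) = Xopen X"
  unfolding Xp_def using istopology_Xopen by (rule topology_inverse')

lemma openin_imp_Xp: "openin X W \<Longrightarrow> openin (Xp X) W"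
  unfolding openin_Xp Xopen_def using openin_subset by blast

lemma topspace_Xp [simp]: "topspace (Xp X) = topspace X"
proof -
  have "openin (Xp X) (topspace X)" by (rule openin_imp_Xp) simp
  moreover have "\<And>W. openin (Xp X) W \<Longrightarrow> W \<subseteq> topspace X" unfolding openin_Xp Xopen_def by blast
  ultimately show ?thesis unfolding topspace_def by blast
qed

lemma t_in_Sset: "t \<in> topspace X \<Longrightarrow> t \<in> Sset X t"
  unfolding Sset_def by auto

lemma GO_rays:
  assumes "GO_space X"
  shows "\<forall>a\<in>topspace X. openin X {x\<in>topspace X. x < a} \<and> openin X {x\<in>topspace X. a < x}"
  using assms unfolding GO_space_def by (elim conjE) assumption

lemma GO_base:
  assumes "GO_space X"
  shows "\<forall>U x. openin X U \<and> x \<in> U \<longrightarrow> (\<exists>V. openin X V \<and> order_convex_in (topspace X) V \<and> x \<in> V \<and> V \<subseteq> U)"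
  using assms unfolding GO_space_def by (elim conjE) assumption

lemma GO_ray_open:
  assumes "GO_space X" "a \<in> topspace X"
  shows "openin X {x\<in>topspace X. x < a}" "openin X {x\<in>topspace X. a < x}"
  using GO_rays[OF assms(1)] assms(2) by blast+

lemma GO_convex_nbhd:
  assumes "GO_space X" "openin X U" "x \<in> U"
  obtains V where "openin X V" "x \<in> V" "V \<subseteq> U" "\<And>a b c. a \<in> V \<Longrightarrow> b \<in> V \<Longrightarrow> c \<in> topspace X \<Longrightarrow> a \<le> c \<Longrightarrow> c \<le> b \<Longrightarrow> c \<in> V"
proof -
  obtain V where V: "openin X V" "order_convex_in (topspace X) V" "x \<in> V" "V \<subseteq> U"
    using GO_base[OF assms(1)] assms(2,3) by blast
  show ?thesis by (rule that[OF V(1,3,4)]) (use V(2)[unfolded order_convex_in_def] in blast)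
qed

lemma not_lbad_ex:
  "\<not> lbad X t \<Longrightarrow> \<exists>A. countable A \<and> A \<subseteq> {a\<in>topspace X. a < t} \<and> (\<forall>b\<in>topspace X. b < t \<longrightarrow> (\<exists>a\<in>A. b < a))"
proof -
  assume "\<not> lbad X t"
  then obtain A where A: "countable A" "A \<subseteq> {a\<in>topspace X. a < t}" "\<not> (\<exists>b\<in>topspace X. b < t \<and> (\<forall>a\<in>A. a \<le> b))"
    unfolding lbad_def by blast
  show ?thesis
  proof (intro exI[of _ A] conjI ballI impI)
    fix b assume "b \<in> topspace X" "b < t"
    then obtain a where "a \<in> A" "\<not> a \<le> b" using A(3) by blast
    then show "\<exists>a\<in>A. b < a" using not_le by blast
  qed (use A(1,2) in blast)+
qed

lemma not_rbad_ex:
  "\<not> rbad X t \<Longrightarrow> \<exists>A. countable A \<and> A \<subseteq> {a\<in>topspace X. t < a} \<and> (\<forall>b\<in>topspace X. t < b \<longrightarrow> (\<exists>a\<in>A. a < b))"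
proof -
  assume "\<not> rbad X t"
  then obtain A where A: "countable A" "A \<subseteq> {a\<in>topspace X. t < a}" "\<not> (\<exists>b\<in>topspace X. t < b \<and> (\<forall>a\<in>A. b \<le> a))"
    unfolding rbad_def by blast
  show ?thesis
  proof (intro exI[of _ A] conjI ballI impI)
    fix b assume "b \<in> topspace X" "t < b"
    then obtain a where "a \<in> A" "\<not> b \<le> a" using A(3) by blast
    then show "\<exists>a\<in>A. a < b" using not_le by blast
  qed (use A(1,2) in blast)+
qed

lemma not_lbad:
  assumes "\<not> lbad X t"
  obtains A where "countable A" "A \<subseteq> {a\<in>topspace X. a < t}" "\<And>b. b \<in> topspace X \<Longrightarrow> b < t \<Longrightarrow> \<exists>a\<in>A. b < a"
proof -
  obtain A where A: "countable A" "A \<subseteq> {a\<in>topspace X. a < t}" "\<not> (\<exists>b\<in>topspace X. b < t \<and> (\<forall>a\<in>A. a \<le> b))"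
    using assms unfolding lbad_def by blast
  show ?thesis
  proof (rule that[OF A(1,2)])
    fix b assume b: "b \<in> topspace X" "b < t"
    then obtain a where "a \<in> A" "\<not> a \<le> b" using A(3) by blast
    then show "\<exists>a\<in>A. b < a" by (intro bexI[of _ a]) (simp_all add: not_le)
  qed
qed

lemma not_rbad:
  assumes "\<not> rbad X t"
  obtains A where "countable A" "A \<subseteq> {a\<in>topspace X. t < a}" "\<And>b. b \<in> topspace X \<Longrightarrow> t < b \<Longrightarrow> \<exists>a\<in>A. a < b"
proof -
  obtain A where A: "countable A" "A \<subseteq> {a\<in>topspace X. t < a}" "\<not> (\<exists>b\<in>topspace X. t < b \<and> (\<forall>a\<in>A. b \<le> a))"
    using assms unfolding rbad_def by blast
  show ?thesis
  proof (rule that[OF A(1,2)])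
    fix b assume b: "b \<in> topspace X" "t < b"
    then obtain a where "a \<in> A" "\<not> b \<le> a" using A(3) by blast
    then show "\<exists>a\<in>A. a < b" by (intro bexI[of _ a]) (simp_all add: not_le)
  qed
qed

lemma fc_Xp:
  assumes GO: "GO_space X"
  shows "first_countable (Xp X)"
  unfolding first_countable_def topspace_Xp
proof (intro ballI)
  fix t assume t: "t \<in> topspace X"
  obtain A where A: "countable A" "A \<subseteq> {a\<in>topspace X. a < t}"
    "\<not> lbad X t \<Longrightarrow> (\<forall>b\<in>topspace X. b < t \<longrightarrow> (\<exists>a\<in>A. b < a))"
  proof (cases "lbad X t")
    case True show ?thesis by (rule that[of "{}"]) (simp_all add: True)
  next
    case False
    from not_lbad_ex[OF False] obtain A0 where A0: "countable A0" "A0 \<subseteq> {a\<in>topspace X. a < t}" "\<forall>b\<in>topspace X. b < t \<longrightarrow> (\<exists>a\<in>A0. b < a)"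
      by (elim exE conjE)
    show ?thesis by (rule that[OF A0(1,2)]) (rule A0(3))
  qed
  obtain B where B: "countable B" "B \<subseteq> {a\<in>topspace X. t < a}"
    "\<not> rbad X t \<Longrightarrow> (\<forall>b\<in>topspace X. t < b \<longrightarrow> (\<exists>a\<in>B. a < b))"
  proof (cases "rbad X t")
    case True show ?thesis by (rule that[of "{}"]) (simp_all add: True)
  next
    case False
    from not_rbad_ex[OF False] obtain A0 where A0: "countable A0" "A0 \<subseteq> {a\<in>topspace X. t < a}" "\<forall>b\<in>topspace X. t < b \<longrightarrow> (\<exists>a\<in>A0. a < b)"
      by (elim exE conjE)
    show ?thesis by (rule that[OF A0(1,2)]) (rule A0(3))
  qed
  define N where "N la rb = {s\<in>topspace X. (case la of None \<Rightarrow> t \<le> s | Some a \<Rightarrow> a < s) \<and> (case rb of None \<Rightarrow> s \<le> t | Some b \<Rightarrow> s < b)}" for la rb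
  define LA where "LA = insert None (Some ` A)"
  define RB where "RB = insert None (Some ` B)"
  define \<B> where "\<B> = {W. \<exists>la\<in>LA. \<exists>rb\<in>RB. W = N la rb \<and> openin (Xp X) W}"
  show "\<exists>\<B>. countable \<B> \<and> (\<forall>V\<in>\<B>. openin (Xp X) V) \<and> (\<forall>U. openin (Xp X) U \<and> t \<in> U \<longrightarrow> (\<exists>V\<in>\<B>. t \<in> V \<and> V \<subseteq> U))"
  proof (intro exI conjI allI impI)
    have "\<B> \<subseteq> (\<lambda>(la,rb). N la rb) ` (LA \<times> RB)" unfolding \<B>_def by auto
    moreover have "countable (LA \<times> RB)" unfolding LA_def RB_def using A(1) B(1) by simp
    ultimately show "countable \<B>" by (meson countable_image countable_subset)
    show "\<forall>V\<in>\<B>. openin (Xp X) V" unfolding \<B>_def by blast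
    fix U assume U: "openin (Xp X) U \<and> t \<in> U"
    obtain V where V: "openin X V" "t \<in> V" "V \<inter> Sset X t \<subseteq> U"
      using U unfolding openin_Xp Xopen_def by blast
    obtain V0 where V0: "openin X V0" "t \<in> V0" "V0 \<subseteq> V"
      and cvx: "\<And>a b c. a \<in> V0 \<Longrightarrow> b \<in> V0 \<Longrightarrow> c \<in> topspace X \<Longrightarrow> a \<le> c \<Longrightarrow> c \<le> b \<Longrightarrow> c \<in> V0"
      using GO_convex_nbhd[OF GO V(1,2)] by blast
    have V0X: "V0 \<subseteq> topspace X" using V0(1) openin_subset by blast
    obtain la where la: "la \<in> LA" and laN: "la = None \<Longrightarrow> lbad X t \<or> (\<forall>b\<in>V0. \<not> b < t)"
      and laS: "\<And>a. la = Some a \<Longrightarrow> \<not> lbad X t \<and> a \<in> topspace X \<and> a < t \<and> (\<exists>b\<in>V0. b \<le> a)"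
    proof (cases "lbad X t \<or> (\<forall>b\<in>V0. \<not> b < t)")
      case True then show ?thesis using that[of None] unfolding LA_def by auto
    next
      case False
      then obtain b where b: "b \<in> V0" "b < t" "\<not> lbad X t" by blast
      then obtain a where a: "a \<in> A" "b < a" using A(3) V0X by blast
      have aS: "Some a \<in> LA" unfolding LA_def using a(1) by blast
      have aX: "a \<in> topspace X" "a < t" using a(1) A(2) by blast+
      have ble: "b \<le> a" using a(2) by simp
      show ?thesis
      proof (rule that[of "Some a", OF aS])
        show "Some a = None \<Longrightarrow> lbad X t \<or> (\<forall>b\<in>V0. \<not> b < t)" by simp
        fix a' assume "Some a = Some a'"
        then have "a' = a" by simp
        then show "\<not> lbad X t \<and> a' \<in> topspace X \<and> a' < t \<and> (\<exists>b\<in>V0. b \<le> a')"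
          using b aX ble by blast
      qed
    qed
    obtain rb where rb: "rb \<in> RB" and rbN: "rb = None \<Longrightarrow> rbad X t \<or> (\<forall>b\<in>V0. \<not> t < b)"
      and rbS: "\<And>a. rb = Some a \<Longrightarrow> \<not> rbad X t \<and> a \<in> topspace X \<and> t < a \<and> (\<exists>b\<in>V0. a \<le> b)"
    proof (cases "rbad X t \<or> (\<forall>b\<in>V0. \<not> t < b)")
      case True then show ?thesis using that[of None] unfolding RB_def by auto
    next
      case False
      then obtain b where b: "b \<in> V0" "t < b" "\<not> rbad X t" by blast
      then obtain a where a: "a \<in> B" "a < b" using B(3) V0X by blast
      have aS: "Some a \<in> RB" unfolding RB_def using a(1) by blast
      have aX: "a \<in> topspace X" "t < a" using a(1) B(2) by blast+
      have ble: "a \<le> b" using a(2) by simp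
      show ?thesis
      proof (rule that[of "Some a", OF aS])
        show "Some a = None \<Longrightarrow> rbad X t \<or> (\<forall>b\<in>V0. \<not> t < b)" by simp
        fix a' assume "Some a = Some a'"
        then have "a' = a" by simp
        then show "\<not> rbad X t \<and> a' \<in> topspace X \<and> t < a' \<and> (\<exists>b\<in>V0. a' \<le> b)"
          using b aX ble by blast
      qed
    qed
    define W where "W = N la rb"
    have WX: "W \<subseteq> topspace X" unfolding W_def N_def by blast
    have Lcond: "\<And>s. s \<in> W \<Longrightarrow> s < t \<Longrightarrow> \<exists>a. la = Some a \<and> a < s"
      unfolding W_def N_def by (cases la) auto
    have Rcond: "\<And>s. s \<in> W \<Longrightarrow> t < s \<Longrightarrow> \<exists>a. rb = Some a \<and> s < a"
      unfolding W_def N_def by (cases rb) auto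
    have tW: "t \<in> W"
      unfolding W_def N_def using t laS rbS by (cases la; cases rb) auto
    have WV0: "W \<subseteq> V0"
    proof
      fix s assume s: "s \<in> W"
      have sX: "s \<in> topspace X" using s WX by blast
      consider "s < t" | "s = t" | "t < s" using less_linear by blast
      then show "s \<in> V0"
      proof cases
        case 1
        then obtain a where "la = Some a" "a < s" using Lcond s by blast
        then obtain b where "b \<in> V0" "b \<le> a" using laS by blast
        then show ?thesis using cvx[of b t s] V0(2) sX \<open>a < s\<close> 1 by simp
      next
        case 2 then show ?thesis using V0(2) by simp
      next
        case 3
        then obtain a where "rb = Some a" "s < a" using Rcond s by blast
        then obtain b where "b \<in> V0" "a \<le> b" using rbS by blast
        then show ?thesis using cvx[of t b s] V0(2) sX \<open>s < a\<close> 3 by simp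
      qed
    qed
    have WS: "W \<subseteq> Sset X t"
    proof
      fix s assume s: "s \<in> W"
      have "s < t \<Longrightarrow> \<not> lbad X t" using Lcond[OF s] laS by blast
      moreover have "t < s \<Longrightarrow> \<not> rbad X t" using Rcond[OF s] rbS by blast
      ultimately show "s \<in> Sset X t" using s WX unfolding Sset_def by blast
    qed
    have Wopen: "openin (Xp X) W"
      unfolding openin_Xp Xopen_def
    proof (intro conjI ballI)
      show "W \<subseteq> topspace X" by (rule WX)
      fix s assume s: "s \<in> W"
      have sX: "s \<in> topspace X" using s WX by blast
      consider "s < t" | "s = t" | "t < s" using less_linear by blast
      then show "\<exists>V. openin X V \<and> s \<in> V \<and> V \<inter> Sset X s \<subseteq> W"
      proof cases
        case 1
        then obtain a where a: "la = Some a" "a < s" using Lcond s by blast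
        have aX: "a \<in> topspace X" using laS a(1) by blast
        let ?V = "{u\<in>topspace X. a < u} \<inter> {u\<in>topspace X. u < t}"
        have "openin X ?V" using GO_ray_open[OF GO aX] GO_ray_open[OF GO t] by blast
        moreover have "s \<in> ?V" using sX a 1 by simp
        moreover have "?V \<subseteq> W"
        proof
          fix u assume u: "u \<in> ?V"
          have "case rb of None \<Rightarrow> u \<le> t | Some b \<Rightarrow> u < b"
            using u rbS by (cases rb) force+
          then show "u \<in> W" unfolding W_def N_def using u a by simp
        qed
        ultimately show ?thesis by blast
      next
        case 3
        then obtain a where a: "rb = Some a" "s < a" using Rcond s by blast
        have aX: "a \<in> topspace X" using rbS a(1) by blast
        let ?V = "{u\<in>topspace X. u < a} \<inter> {u\<in>topspace X. t < u}"
        have "openin X ?V" using GO_ray_open[OF GO aX] GO_ray_open[OF GO t] by blast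
        moreover have "s \<in> ?V" using sX a 3 by simp
        moreover have "?V \<subseteq> W"
        proof
          fix u assume u: "u \<in> ?V"
          have "case la of None \<Rightarrow> t \<le> u | Some b \<Rightarrow> b < u"
            using u laS by (cases la) force+
          then show "u \<in> W" unfolding W_def N_def using u a by simp
        qed
        ultimately show ?thesis by blast
      next
        case 2
        define L where "L = (case la of None \<Rightarrow> topspace X | Some a \<Rightarrow> {u\<in>topspace X. a < u})"
        define R where "R = (case rb of None \<Rightarrow> topspace X | Some a \<Rightarrow> {u\<in>topspace X. u < a})"
        have Lo: "openin X L" unfolding L_def using laS GO_ray_open[OF GO] by (cases la) auto
        have Ro: "openin X R" unfolding R_def using rbS GO_ray_open[OF GO] by (cases rb) auto
        have tL: "t \<in> L" unfolding L_def using t laS by (cases la) auto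
        have tR: "t \<in> R" unfolding R_def using t rbS by (cases rb) auto
        have "V0 \<inter> L \<inter> R \<inter> Sset X t \<subseteq> W"
        proof
          fix u assume u: "u \<in> V0 \<inter> L \<inter> R \<inter> Sset X t"
          have uX: "u \<in> topspace X" using u V0X by blast
          have "case la of None \<Rightarrow> t \<le> u | Some b \<Rightarrow> b < u"
          proof (cases la)
            case None
            then have "lbad X t \<or> (\<forall>b\<in>V0. \<not> b < t)" using laN by blast
            then show ?thesis using u None unfolding Sset_def by (auto simp: not_less)
          next
            case (Some b) then show ?thesis using u unfolding L_def by simp
          qed
          moreover have "case rb of None \<Rightarrow> u \<le> t | Some b \<Rightarrow> u < b"
          proof (cases rb)
            case None
            then have "rbad X t \<or> (\<forall>b\<in>V0. \<not> t < b)" using rbN by blast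
            then show ?thesis using u None unfolding Sset_def by (auto simp: not_less)
          next
            case (Some b) then show ?thesis using u unfolding R_def by simp
          qed
          ultimately show "u \<in> W" unfolding W_def N_def using uX by simp
        qed
        then show ?thesis using 2 V0 Lo Ro tL tR by (intro exI[of _ "V0 \<inter> L \<inter> R"]) auto
      qed
    qed
    have "W \<in> \<B>" unfolding \<B>_def W_def using la rb Wopen W_def by blast
    moreover have "W \<subseteq> U" using WV0 WS V0(3) V(3) by blast
    ultimately show "\<exists>V\<in>\<B>. t \<in> V \<and> V \<subseteq> U" using tW by blast
  qed
qed

lemma left_key:
  fixes X :: "'a::linorder topology" and E :: "'b topology" and Y :: "nat topology"
  assumes GO: "GO_space X" and cE: "countable (topspace E)" and cY: "countable (topspace Y)"
    and cl0: "\<forall>y\<in>topspace Y. closedin (prod_topology E X) (\<phi> y)"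
    and t: "t \<in> topspace X"
  shows "\<exists>L. openin X L \<and> t \<in> L \<and> (\<forall>y\<in>topspace Y. \<forall>e s. (e,s) \<in> \<phi> y \<and> s \<in> L \<and> s < t \<and> lbad X t \<longrightarrow> (e,t) \<in> \<phi> y)"
proof (cases "\<not> lbad X t \<or> (\<exists>L0. openin X L0 \<and> t \<in> L0 \<and> (\<forall>s\<in>L0. \<not> s < t))")
  case True
  then show ?thesis
  proof
    assume "\<not> lbad X t" then show ?thesis using t by (intro exI[of _ "topspace X"]) auto
  next
    assume "\<exists>L0. openin X L0 \<and> t \<in> L0 \<and> (\<forall>s\<in>L0. \<not> s < t)"
    then obtain L0 where "openin X L0" "t \<in> L0" "\<forall>s\<in>L0. \<not> s < t" by blast
    then show ?thesis by (intro exI[of _ L0]) blast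
  qed
next
  case False
  then have lb: "lbad X t" and nli: "\<And>L0. openin X L0 \<Longrightarrow> t \<in> L0 \<Longrightarrow> \<exists>s\<in>L0. s < t" by auto
  have cl: "\<And>y. y \<in> topspace Y \<Longrightarrow> closedin (prod_topology E X) (\<phi> y)" using cl0 by blast
  have sub: "\<phi> y \<subseteq> topspace E \<times> topspace X" if "y \<in> topspace Y" for y
    using closedin_subset[OF cl[OF that]] by simp
  have ex: "\<exists>a. a \<in> topspace X \<and> a < t \<and> (\<forall>s. a < s \<and> s < t \<longrightarrow> (e,s) \<notin> \<phi> y)"
    if y: "y \<in> topspace Y" and e: "e \<in> topspace E" and nt: "(e,t) \<notin> \<phi> y" for y e
  proof -
    have So: "openin (prod_topology E X) (topspace (prod_topology E X) - \<phi> y)"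
      using cl[OF y] by (simp add: closedin_def)
    have eS: "(e,t) \<in> topspace (prod_topology E X) - \<phi> y" using e t nt by simp
    obtain U V where UV: "openin E U" "openin X V" "e \<in> U" "t \<in> V"
        "U \<times> V \<subseteq> topspace (prod_topology E X) - \<phi> y"
      using So[unfolded openin_prod_topology_alt, rule_format, OF eS] by (elim exE conjE)
    obtain V0 where V0: "openin X V0" "t \<in> V0" "V0 \<subseteq> V"
      and cvx: "\<And>a b c. a \<in> V0 \<Longrightarrow> b \<in> V0 \<Longrightarrow> c \<in> topspace X \<Longrightarrow> a \<le> c \<Longrightarrow> c \<le> b \<Longrightarrow> c \<in> V0"
      using GO_convex_nbhd[OF GO UV(2,4)] by blast
    obtain a where a: "a \<in> V0" "a < t" using nli[OF V0(1,2)] by blast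
    have aX: "a \<in> topspace X" using a(1) V0(1) openin_subset by blast
    have "(e,s) \<notin> \<phi> y" if "a < s" "s < t" for s
    proof
      assume es: "(e,s) \<in> \<phi> y"
      then have "s \<in> topspace X" using sub[OF y] by blast
      then have "s \<in> V0" using cvx[of a t s] a V0(2) that by simp
      then have "(e,s) \<in> U \<times> V" using UV(3) V0(3) by blast
      then show False using UV(5) es by blast
    qed
    then show ?thesis using aX a by blast
  qed
  define af where "af y e = (SOME a. a \<in> topspace X \<and> a < t \<and> (\<forall>s. a < s \<and> s < t \<longrightarrow> (e,s) \<notin> \<phi> y))" for y e
  define P where "P = {(y,e). y \<in> topspace Y \<and> e \<in> topspace E \<and> (e,t) \<notin> \<phi> y}"
  have afP: "af y e \<in> topspace X \<and> af y e < t \<and> (\<forall>s. af y e < s \<and> s < t \<longrightarrow> (e,s) \<notin> \<phi> y)" if "(y,e) \<in> P" for y e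
  proof -
    have "y \<in> topspace Y" "e \<in> topspace E" "(e,t) \<notin> \<phi> y" using that unfolding P_def by simp_all
    from ex[OF this] show ?thesis unfolding af_def by (rule someI_ex)
  qed
  define A where "A = (\<lambda>(y,e). af y e) ` P"
  have "countable P" unfolding P_def
    by (rule countable_subset[of _ "topspace Y \<times> topspace E"]) (use cY cE in auto)
  then have cA: "countable A" unfolding A_def by simp
  have AX: "A \<subseteq> {a\<in>topspace X. a < t}" unfolding A_def using afP by auto
  obtain b where b: "b \<in> topspace X" "b < t" "\<forall>a\<in>A. a \<le> b"
    using lb cA AX unfolding lbad_def by blast
  show ?thesis
  proof (intro exI[of _ "{u\<in>topspace X. b < u}"] conjI ballI allI impI)
    show "openin X {u\<in>topspace X. b < u}" using GO_ray_open[OF GO b(1)] by blast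
    show "t \<in> {u\<in>topspace X. b < u}" using t b by simp
    fix y e s assume y: "y \<in> topspace Y" and H: "(e,s) \<in> \<phi> y \<and> s \<in> {u\<in>topspace X. b < u} \<and> s < t \<and> lbad X t"
    show "(e,t) \<in> \<phi> y"
    proof (rule ccontr)
      assume nt: "(e,t) \<notin> \<phi> y"
      have eE: "e \<in> topspace E" using H sub[OF y] by blast
      have yeP: "(y,e) \<in> P" unfolding P_def using y eE nt by simp
      have "af y e \<in> A" unfolding A_def by (rule image_eqI[of _ _ "(y,e)"]) (simp_all add: yeP)
      then have "af y e \<le> b" using b(3) by blast
      then have "af y e < s" using H le_less_trans by blast
      then show False using afP[OF yeP] H by blast
    qed
  qed
qed

lemma right_key:
  fixes X :: "'a::linorder topology" and E :: "'b topology" and Y :: "nat topology"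
  assumes GO: "GO_space X" and cE: "countable (topspace E)" and cY: "countable (topspace Y)"
    and cl0: "\<forall>y\<in>topspace Y. closedin (prod_topology E X) (\<phi> y)"
    and t: "t \<in> topspace X"
  shows "\<exists>L. openin X L \<and> t \<in> L \<and> (\<forall>y\<in>topspace Y. \<forall>e s. (e,s) \<in> \<phi> y \<and> s \<in> L \<and> t < s \<and> rbad X t \<longrightarrow> (e,t) \<in> \<phi> y)"
proof (cases "\<not> rbad X t \<or> (\<exists>L0. openin X L0 \<and> t \<in> L0 \<and> (\<forall>s\<in>L0. \<not> t < s))")
  case True
  then show ?thesis
  proof
    assume "\<not> rbad X t" then show ?thesis using t by (intro exI[of _ "topspace X"]) auto
  next
    assume "\<exists>L0. openin X L0 \<and> t \<in> L0 \<and> (\<forall>s\<in>L0. \<not> t < s)"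
    then obtain L0 where "openin X L0" "t \<in> L0" "\<forall>s\<in>L0. \<not> t < s" by blast
    then show ?thesis by (intro exI[of _ L0]) blast
  qed
next
  case False
  then have lb: "rbad X t" and nli: "\<And>L0. openin X L0 \<Longrightarrow> t \<in> L0 \<Longrightarrow> \<exists>s\<in>L0. t < s" by auto
  have cl: "\<And>y. y \<in> topspace Y \<Longrightarrow> closedin (prod_topology E X) (\<phi> y)" using cl0 by blast
  have sub: "\<phi> y \<subseteq> topspace E \<times> topspace X" if "y \<in> topspace Y" for y
    using closedin_subset[OF cl[OF that]] by simp
  have ex: "\<exists>a. a \<in> topspace X \<and> t < a \<and> (\<forall>s. s < a \<and> t < s \<longrightarrow> (e,s) \<notin> \<phi> y)"
    if y: "y \<in> topspace Y" and e: "e \<in> topspace E" and nt: "(e,t) \<notin> \<phi> y" for y e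
  proof -
    have So: "openin (prod_topology E X) (topspace (prod_topology E X) - \<phi> y)"
      using cl[OF y] by (simp add: closedin_def)
    have eS: "(e,t) \<in> topspace (prod_topology E X) - \<phi> y" using e t nt by simp
    obtain U V where UV: "openin E U" "openin X V" "e \<in> U" "t \<in> V"
        "U \<times> V \<subseteq> topspace (prod_topology E X) - \<phi> y"
      using So[unfolded openin_prod_topology_alt, rule_format, OF eS] by (elim exE conjE)
    obtain V0 where V0: "openin X V0" "t \<in> V0" "V0 \<subseteq> V"
      and cvx: "\<And>a b c. a \<in> V0 \<Longrightarrow> b \<in> V0 \<Longrightarrow> c \<in> topspace X \<Longrightarrow> a \<le> c \<Longrightarrow> c \<le> b \<Longrightarrow> c \<in> V0"
      using GO_convex_nbhd[OF GO UV(2,4)] by blast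
    obtain a where a: "a \<in> V0" "t < a" using nli[OF V0(1,2)] by blast
    have aX: "a \<in> topspace X" using a(1) V0(1) openin_subset by blast
    have "(e,s) \<notin> \<phi> y" if "s < a" "t < s" for s
    proof
      assume es: "(e,s) \<in> \<phi> y"
      then have "s \<in> topspace X" using sub[OF y] by blast
      then have "s \<in> V0" using cvx[of t a s] a V0(2) that by simp
      then have "(e,s) \<in> U \<times> V" using UV(3) V0(3) by blast
      then show False using UV(5) es by blast
    qed
    then show ?thesis using aX a by blast
  qed
  define af where "af y e = (SOME a. a \<in> topspace X \<and> t < a \<and> (\<forall>s. s < a \<and> t < s \<longrightarrow> (e,s) \<notin> \<phi> y))" for y e
  define P where "P = {(y,e). y \<in> topspace Y \<and> e \<in> topspace E \<and> (e,t) \<notin> \<phi> y}"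
  have afP: "af y e \<in> topspace X \<and> t < af y e \<and> (\<forall>s. s < af y e \<and> t < s \<longrightarrow> (e,s) \<notin> \<phi> y)" if "(y,e) \<in> P" for y e
  proof -
    have "y \<in> topspace Y" "e \<in> topspace E" "(e,t) \<notin> \<phi> y" using that unfolding P_def by simp_all
    from ex[OF this] show ?thesis unfolding af_def by (rule someI_ex)
  qed
  define A where "A = (\<lambda>(y,e). af y e) ` P"
  have "countable P" unfolding P_def
    by (rule countable_subset[of _ "topspace Y \<times> topspace E"]) (use cY cE in auto)
  then have cA: "countable A" unfolding A_def by simp
  have AX: "A \<subseteq> {a\<in>topspace X. t < a}" unfolding A_def using afP by auto
  obtain b where b: "b \<in> topspace X" "t < b" "\<forall>a\<in>A. b \<le> a"
    using lb cA AX unfolding rbad_def by blast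
  show ?thesis
  proof (intro exI[of _ "{u\<in>topspace X. u < b}"] conjI ballI allI impI)
    show "openin X {u\<in>topspace X. u < b}" using GO_ray_open[OF GO b(1)] by blast
    show "t \<in> {u\<in>topspace X. u < b}" using t b by simp
    fix y e s assume y: "y \<in> topspace Y" and H: "(e,s) \<in> \<phi> y \<and> s \<in> {u\<in>topspace X. u < b} \<and> t < s \<and> rbad X t"
    show "(e,t) \<in> \<phi> y"
    proof (rule ccontr)
      assume nt: "(e,t) \<notin> \<phi> y"
      have eE: "e \<in> topspace E" using H sub[OF y] by blast
      have yeP: "(y,e) \<in> P" unfolding P_def using y eE nt by simp
      have "af y e \<in> A" unfolding A_def by (rule image_eqI[of _ _ "(y,e)"]) (simp_all add: yeP)
      then have "b \<le> af y e" using b(3) by blast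
      then have "s < af y e" using H less_le_trans by blast
      then show False using afP[OF yeP] H by blast
    qed
  qed
qed

lemma lsc_Xp:
  fixes X :: "'a::linorder topology" and E :: "'b topology" and Y :: "nat topology"
  assumes GO: "GO_space X" and cE: "countable (topspace E)" and cY: "countable (topspace Y)"
    and cl: "\<And>y. y \<in> topspace Y \<Longrightarrow> closedin (prod_topology E X) (\<phi> y)"
    and lsc: "\<And>U. openin (prod_topology E X) U \<Longrightarrow> openin Y {y\<in>topspace Y. \<phi> y \<inter> U \<noteq> {}}"
    and W: "openin (prod_topology E (Xp X)) W"
  shows "openin Y {y\<in>topspace Y. \<phi> y \<inter> W \<noteq> {}}"
proof (subst openin_subopen, intro ballI)
  have clB: "\<forall>y\<in>topspace Y. closedin (prod_topology E X) (\<phi> y)" using cl by blast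
  fix w0 assume w0: "w0 \<in> {y\<in>topspace Y. \<phi> y \<inter> W \<noteq> {}}"
  have sub: "\<phi> y \<subseteq> topspace E \<times> topspace X" if "y \<in> topspace Y" for y
    using closedin_subset[OF cl[OF that]] by simp
  obtain e t where et: "(e,t) \<in> \<phi> w0" "(e,t) \<in> W" using w0 by auto
  have tX: "t \<in> topspace X" using et sub w0 by blast
  obtain U V where UV: "openin E U" "openin (Xp X) V" "e \<in> U" "t \<in> V" "U \<times> V \<subseteq> W"
    using W[unfolded openin_prod_topology_alt, rule_format, OF et(2)] by (elim exE conjE)
  obtain V1 where V1: "openin X V1" "t \<in> V1" "V1 \<inter> Sset X t \<subseteq> V"
    using UV(2,4) unfolding openin_Xp Xopen_def by blast
  obtain L where L: "openin X L" "t \<in> L" "\<forall>y\<in>topspace Y. \<forall>e s. (e,s) \<in> \<phi> y \<and> s \<in> L \<and> s < t \<and> lbad X t \<longrightarrow> (e,t) \<in> \<phi> y"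
    using left_key[where \<phi>=\<phi>, OF GO cE cY clB tX] by (elim exE conjE)
  obtain R where R: "openin X R" "t \<in> R" "\<forall>y\<in>topspace Y. \<forall>e s. (e,s) \<in> \<phi> y \<and> s \<in> R \<and> t < s \<and> rbad X t \<longrightarrow> (e,t) \<in> \<phi> y"
    using right_key[where \<phi>=\<phi>, OF GO cE cY clB tX] by (elim exE conjE)
  define O' where "O' = U \<times> (V1 \<inter> L \<inter> R)"
  have "openin (prod_topology E X) O'" unfolding O'_def openin_prod_Times_iff
    using UV(1) V1(1) L(1) R(1) by blast
  then have No: "openin Y {y\<in>topspace Y. \<phi> y \<inter> O' \<noteq> {}}" by (rule lsc)
  have w0N: "w0 \<in> {y\<in>topspace Y. \<phi> y \<inter> O' \<noteq> {}}"
    using w0 et UV(3) V1(2) L(2) R(2) unfolding O'_def by blast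
  have tV: "t \<in> V" using V1 t_in_Sset[OF tX] by blast
  have "{y\<in>topspace Y. \<phi> y \<inter> O' \<noteq> {}} \<subseteq> {y\<in>topspace Y. \<phi> y \<inter> W \<noteq> {}}"
  proof
    fix y assume y: "y \<in> {y\<in>topspace Y. \<phi> y \<inter> O' \<noteq> {}}"
    then obtain e' s where es: "(e',s) \<in> \<phi> y" "(e',s) \<in> O'" by auto
    have yY: "y \<in> topspace Y" using y by blast
    have sX: "s \<in> topspace X" using es sub yY by blast
    have e'U: "e' \<in> U" and sVLR: "s \<in> V1" "s \<in> L" "s \<in> R" using es(2) unfolding O'_def by auto
    show "y \<in> {y\<in>topspace Y. \<phi> y \<inter> W \<noteq> {}}"
    proof (cases "s \<in> Sset X t")
      case True
      then have "(e',s) \<in> U \<times> V" using e'U sVLR V1(3) by blast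
      then show ?thesis using es(1) UV(5) yY by blast
    next
      case False
      then have "(s < t \<and> lbad X t) \<or> (t < s \<and> rbad X t)" using sX unfolding Sset_def by auto
      then have "(e',t) \<in> \<phi> y"
      proof
        assume h: "s < t \<and> lbad X t"
        show ?thesis using L(3)[rule_format, OF yY] es(1) sVLR(2) h by blast
      next
        assume h: "t < s \<and> rbad X t"
        show ?thesis using R(3)[rule_format, OF yY] es(1) sVLR(3) h by blast
      qed
      moreover have "(e',t) \<in> U \<times> V" using e'U tV by blast
      ultimately show ?thesis using UV(5) yY by blast
    qed
  qed
  then show "\<exists>T. openin Y T \<and> w0 \<in> T \<and> T \<subseteq> {y\<in>topspace Y. \<phi> y \<inter> W \<noteq> {}}"
    using No w0N by blast
qed

lemma fc_prod_seq:
  assumes fE: "first_countable E" and fX: "first_countable X" and z: "z \<in> topspace (prod_topology E X)"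
  shows "\<exists>b. (\<forall>i::nat. openin (prod_topology E X) (b i) \<and> z \<in> b i) \<and> (\<forall>U. openin (prod_topology E X) U \<and> z \<in> U \<longrightarrow> (\<exists>i. b i \<subseteq> U))"
proof -
  obtain e t where zz: "z = (e,t)" by (cases z)
  have e: "e \<in> topspace E" and t: "t \<in> topspace X" using z zz by auto
  obtain BE where BE: "countable BE" "\<forall>V\<in>BE. openin E V" "\<And>U. openin E U \<Longrightarrow> e \<in> U \<Longrightarrow> \<exists>V\<in>BE. e \<in> V \<and> V \<subseteq> U"
  proof -
    have "\<exists>\<B>. countable \<B> \<and> (\<forall>V \<in> \<B>. openin E V) \<and> (\<forall>U. openin E U \<and> e \<in> U \<longrightarrow> (\<exists>V \<in> \<B>. e \<in> V \<and> V \<subseteq> U))"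
      using fE e unfolding first_countable_def by (rule bspec)
    then obtain B0 where B0: "countable B0" "\<forall>V\<in>B0. openin E V" "\<forall>U. openin E U \<and> e \<in> U \<longrightarrow> (\<exists>V \<in> B0. e \<in> V \<and> V \<subseteq> U)"
      by (elim exE conjE)
    show ?thesis by (rule that[OF B0(1,2)]) (use B0(3) in blast)
  qed
  obtain BX where BX: "countable BX" "\<forall>V\<in>BX. openin X V" "\<And>U. openin X U \<Longrightarrow> t \<in> U \<Longrightarrow> \<exists>V\<in>BX. t \<in> V \<and> V \<subseteq> U"
  proof -
    have "\<exists>\<B>. countable \<B> \<and> (\<forall>V \<in> \<B>. openin X V) \<and> (\<forall>U. openin X U \<and> t \<in> U \<longrightarrow> (\<exists>V \<in> \<B>. t \<in> V \<and> V \<subseteq> U))"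
      using fX t unfolding first_countable_def by (rule bspec)
    then obtain B0 where B0: "countable B0" "\<forall>V\<in>B0. openin X V" "\<forall>U. openin X U \<and> t \<in> U \<longrightarrow> (\<exists>V \<in> B0. t \<in> V \<and> V \<subseteq> U)"
      by (elim exE conjE)
    show ?thesis by (rule that[OF B0(1,2)]) (use B0(3) in blast)
  qed
  define \<B> where "\<B> = (\<lambda>(U,V). U \<times> V) ` ({U\<in>BE. e \<in> U} \<times> {V\<in>BX. t \<in> V})"
  have cB: "countable \<B>" unfolding \<B>_def using BE(1) BX(1) by simp
  have Bprop: "openin (prod_topology E X) W \<and> z \<in> W" if "W \<in> \<B>" for W
    using that BE(2) BX(2) zz unfolding \<B>_def by (auto simp: openin_prod_Times_iff)
  obtain U0 where U0: "U0 \<in> BE" "e \<in> U0" using BE(3)[of "topspace E"] e by auto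
  obtain V0 where V0: "V0 \<in> BX" "t \<in> V0" using BX(3)[of "topspace X"] t by auto
  have ne: "\<B> \<noteq> {}" unfolding \<B>_def using U0 V0 by blast
  show ?thesis
  proof (intro exI[of _ "from_nat_into \<B>"] conjI allI impI)
    fix i show "openin (prod_topology E X) (from_nat_into \<B> i)" "z \<in> from_nat_into \<B> i"
      using Bprop[OF from_nat_into[OF ne]] by auto
  next
    fix U assume U: "openin (prod_topology E X) U \<and> z \<in> U"
    then have Uo: "openin (prod_topology E X) U" and zU: "(e,t) \<in> U" using zz by auto
    obtain U1 V1 where UV: "openin E U1" "openin X V1" "e \<in> U1" "t \<in> V1" "U1 \<times> V1 \<subseteq> U"
      using Uo[unfolded openin_prod_topology_alt, rule_format, OF zU] by (elim exE conjE)
    obtain U2 where U2: "U2 \<in> BE" "e \<in> U2" "U2 \<subseteq> U1" using BE(3)[OF UV(1,3)] by blast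
    obtain V2 where V2: "V2 \<in> BX" "t \<in> V2" "V2 \<subseteq> V1" using BX(3)[OF UV(2,4)] by blast
    have "U2 \<times> V2 \<in> \<B>" unfolding \<B>_def using U2 V2 by blast
    from from_nat_into_surj[OF cB this] obtain i where i: "from_nat_into \<B> i = U2 \<times> V2" by (elim exE)
    have "U2 \<times> V2 \<subseteq> U1 \<times> V1" using U2(3) V2(3) by (rule Sigma_mono)
    then have "from_nat_into \<B> i \<subseteq> U" using i UV(5) by simp
    then show "\<exists>i. from_nat_into \<B> i \<subseteq> U" by (rule exI)
  qed
qed

lemma countable_zd:
  fixes Y :: "'c topology"
  assumes cY: "countable (topspace Y)" and reg: "regular_space Y" and t1: "t1_space Y"
    and W: "openin Y W" and k: "k \<in> W"
  shows "\<exists>C. openin Y C \<and> closedin Y C \<and> k \<in> C \<and> C \<subseteq> W"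
proof -
  have nY: "normal_space Y"
    using cY reg countable_imp_Lindelof_space regular_Lindelof_imp_normal_space by blast
  have kY: "k \<in> topspace Y" using W k openin_subset by blast
  have c1: "closedin Y {k}" using t1 kY by (simp add: closedin_t1_singleton)
  have c2: "closedin Y (topspace Y - W)" using W by blast
  have dj: "disjnt {k} (topspace Y - W)" using k by simp
  obtain f where f: "continuous_map Y euclideanreal f" "f ` {k} \<subseteq> {0}" "f ` (topspace Y - W) \<subseteq> {1}"
    using Urysohn_lemma_alt[OF nY c1 c2 dj, of 0 1] by blast
  have "countable (f ` topspace Y)" using cY by simp
  moreover have "uncountable {0<..<(1::real)}" by (simp add: uncountable_open_interval)
  ultimately have "\<not> {0<..<(1::real)} \<subseteq> f ` topspace Y" using countable_subset by blast
  then obtain r where r0: "r \<in> {0<..<(1::real)}" "r \<notin> f ` topspace Y" by blast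
  then have r: "0 < r" "r < 1" "r \<notin> f ` topspace Y" by simp_all
  define C where "C = {v \<in> topspace Y. f v \<in> {..<r}}"
  have "openin Y C" unfolding C_def
    by (rule openin_continuous_map_preimage[OF f(1)]) simp
  moreover have "C = {v \<in> topspace Y. f v \<in> {..r}}" unfolding C_def using r(3) by force
  then have "closedin Y C"
    using closedin_continuous_map_preimage[OF f(1), of "{..r}"] by simp
  moreover have "k \<in> C" unfolding C_def using kY f(2) r(1) by simp
  moreover have "C \<subseteq> W" unfolding C_def using f(3) r(2) by force
  ultimately show ?thesis by blast
qed

lemma FC:
  fixes Y :: "nat topology" and Z :: "'z topology" and \<phi> :: "nat \<Rightarrow> 'z set"
  assumes zd: "\<And>Nb k. openin Y Nb \<Longrightarrow> k \<in> Nb \<Longrightarrow> \<exists>C. openin Y C \<and> closedin Y C \<and> k \<in> C \<and> C \<subseteq> Nb"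
    and t1: "t1_space Y"
    and fc: "\<And>z. z \<in> topspace Z \<Longrightarrow> \<exists>b. (\<forall>i::nat. openin Z (b i) \<and> z \<in> b i) \<and> (\<forall>U. openin Z U \<and> z \<in> U \<longrightarrow> (\<exists>i. b i \<subseteq> U))"
    and ne: "\<And>y. y \<in> topspace Y \<Longrightarrow> \<phi> y \<noteq> {}"
    and sub: "\<And>y. y \<in> topspace Y \<Longrightarrow> \<phi> y \<subseteq> topspace Z"
    and lsc: "\<And>U. openin Z U \<Longrightarrow> openin Y {y \<in> topspace Y. \<phi> y \<inter> U \<noteq> {}}"
  shows "\<exists>f. continuous_map Y Z f \<and> (\<forall>y\<in>topspace Y. f y \<in> \<phi> y)"
proof -
  obtain bas where bas: "\<And>z. z \<in> topspace Z \<Longrightarrow> (\<forall>i::nat. openin Z (bas z i) \<and> z \<in> bas z i) \<and> (\<forall>U. openin Z U \<and> z \<in> U \<longrightarrow> (\<exists>i. bas z i \<subseteq> U))"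
    using fc by metis
  let ?Y = "topspace Y"
  define xupd :: "nat \<Rightarrow> (nat \<Rightarrow> 'z set) \<times> (nat \<Rightarrow> 'z) \<Rightarrow> nat \<Rightarrow> 'z" where
    "xupd s st = (if s \<in> ?Y then (snd st)(s := (SOME p. p \<in> \<phi> s \<inter> fst st s)) else snd st)" for s st
  define Gs where "Gs s st = fst st (fst (prod_decode s)) \<inter> bas (xupd s st (fst (prod_decode s))) (snd (prod_decode s))" for s st
  define Cs where "Cs s st = (SOME C. openin Y C \<and> closedin Y C \<and> fst (prod_decode s) \<in> C \<and>
        C \<subseteq> {v \<in> ?Y. fst st v = fst st (fst (prod_decode s)) \<and> \<phi> v \<inter> Gs s st \<noteq> {}} \<and> (\<forall>j\<in>C. j \<le> s \<longrightarrow> j = fst (prod_decode s)))" for s st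
  define step where "step s st = (if fst (prod_decode s) \<in> ?Y
      then ((\<lambda>v. if v \<in> Cs s st then Gs s st else fst st v), xupd s st)
      else (fst st, xupd s st))" for s st
  define st where "st = rec_nat ((\<lambda>v. topspace Z), (\<lambda>v. undefined)) step"
  have st0: "st 0 = ((\<lambda>v. topspace Z), (\<lambda>v. undefined))" by (simp add: st_def)
  have stS: "st (Suc s) = step s (st s)" for s by (simp add: st_def)
  define Inv where "Inv s \<longleftrightarrow> (\<forall>w\<in>?Y. openin Z (fst (st s) w) \<and> \<phi> w \<inter> fst (st s) w \<noteq> {}) \<and>
     (\<forall>w\<in>?Y. \<exists>Nb. openin Y Nb \<and> w \<in> Nb \<and> (\<forall>v\<in>Nb. fst (st s) v = fst (st s) w)) \<and>
     (\<forall>j\<in>?Y. j < s \<longrightarrow> snd (st s) j \<in> \<phi> j \<inter> fst (st s) j)" for s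
  have Inv0: "Inv 0"
    unfolding Inv_def st0 using ne sub by (auto simp: Int_absorb2)
  have stepI: "Inv (Suc s) \<and> (\<forall>w\<in>?Y. fst (st (Suc s)) w \<subseteq> fst (st s) w) \<and>
      (fst (prod_decode s) \<in> ?Y \<longrightarrow> (\<exists>C. openin Y C \<and> fst (prod_decode s) \<in> C \<and> (\<forall>j\<in>C. j \<le> s \<longrightarrow> j = fst (prod_decode s)) \<and>
         (\<forall>v\<in>C. fst (st (Suc s)) v \<subseteq> bas (snd (st (Suc s)) (fst (prod_decode s))) (snd (prod_decode s)))))"
    if I: "Inv s" for s
  proof -
    define k where "k = fst (prod_decode s)"
    define i where "i = snd (prod_decode s)"
    have ks: "k \<le> s" unfolding k_def by (metis le_prod_encode_1 prod.collapse prod_decode_inverse)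
    let ?T = "fst (st s)"
    let ?x = "xupd s (st s)"
    have I1: "\<And>w. w \<in> ?Y \<Longrightarrow> openin Z (?T w) \<and> \<phi> w \<inter> ?T w \<noteq> {}"
      and I2: "\<And>w. w \<in> ?Y \<Longrightarrow> \<exists>Nb. openin Y Nb \<and> w \<in> Nb \<and> (\<forall>v\<in>Nb. ?T v = ?T w)"
      and I3: "\<And>j. j \<in> ?Y \<Longrightarrow> j < s \<Longrightarrow> snd (st s) j \<in> \<phi> j \<inter> ?T j"
      using I unfolding Inv_def by blast+
    have xin: "?x j \<in> \<phi> j \<inter> ?T j" if "j \<in> ?Y" "j \<le> s" for j
    proof (cases "j = s")
      case True
      then show ?thesis using that I1[of s] unfolding xupd_def
        by simp (metis (no_types, lifting) Int_iff ex_in_conv someI_ex)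
    next
      case False
      then show ?thesis using that I3[of j] unfolding xupd_def by auto
    qed
    have xsame: "?x j = snd (st s) j" if "j \<noteq> s" for j
      using that unfolding xupd_def by auto
    show ?thesis
    proof (cases "k \<in> ?Y")
      case False
      then have e: "st (Suc s) = (?T, ?x)" unfolding stS step_def k_def by simp
      have "Inv (Suc s)"
        unfolding Inv_def e using I1 I2 xin by auto
      then show ?thesis using False e k_def by auto
    next
      case True
      define G where "G = Gs s (st s)"
      have G: "G = ?T k \<inter> bas (?x k) i" unfolding G_def Gs_def k_def i_def by simp
      have xk: "?x k \<in> \<phi> k \<inter> ?T k" using xin True ks by blast
      have xkZ: "?x k \<in> topspace Z" using xk sub True by blast
      have Gopen: "openin Z G" using G I1[OF True] bas[OF xkZ] by blast
      have xkG: "?x k \<in> G" using G xk bas[OF xkZ] by blast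
      define Nb where "Nb = {v \<in> ?Y. ?T v = ?T k \<and> \<phi> v \<inter> G \<noteq> {}} - {j \<in> ?Y. j \<le> s \<and> j \<noteq> k}"
      have O1: "openin Y {v \<in> ?Y. ?T v = ?T k}"
      proof (subst openin_subopen, intro ballI)
        fix v assume v: "v \<in> {v \<in> ?Y. ?T v = ?T k}"
        obtain Nb' where "openin Y Nb'" "v \<in> Nb'" "\<forall>u\<in>Nb'. ?T u = ?T v" using I2 v by blast
        then show "\<exists>T. openin Y T \<and> v \<in> T \<and> T \<subseteq> {v \<in> ?Y. ?T v = ?T k}"
        proof (intro exI conjI)
          show "openin Y Nb'" "v \<in> Nb'" by fact+
          show "Nb' \<subseteq> {v \<in> ?Y. ?T v = ?T k}" using \<open>openin Y Nb'\<close> \<open>\<forall>u\<in>Nb'. ?T u = ?T v\<close> v openin_subset by force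
        qed
      qed
      have O2: "openin Y {v \<in> ?Y. \<phi> v \<inter> G \<noteq> {}}" using lsc Gopen by blast
      have O3: "closedin Y {j \<in> ?Y. j \<le> s \<and> j \<noteq> k}"
      proof -
        have "finite {j \<in> ?Y. j \<le> s \<and> j \<noteq> k}" by (rule finite_subset[of _ "{..s}"]) auto
        then show ?thesis using t1 unfolding t1_space_closedin_finite by blast
      qed
      have "openin Y Nb"
      proof -
        have "{v \<in> ?Y. ?T v = ?T k \<and> \<phi> v \<inter> G \<noteq> {}} = {v \<in> ?Y. ?T v = ?T k} \<inter> {v \<in> ?Y. \<phi> v \<inter> G \<noteq> {}}" by auto
        then show ?thesis unfolding Nb_def using openin_diff[OF openin_Int[OF O1 O2] O3] by simp
      qed
      moreover have "k \<in> Nb" unfolding Nb_def using True xk xkG by auto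
      ultimately obtain C0 where C0: "openin Y C0" "closedin Y C0" "k \<in> C0" "C0 \<subseteq> Nb" using zd by blast
      have exC: "\<exists>C. openin Y C \<and> closedin Y C \<and> k \<in> C \<and>
        C \<subseteq> {v \<in> ?Y. ?T v = ?T k \<and> \<phi> v \<inter> G \<noteq> {}} \<and> (\<forall>j\<in>C. j \<le> s \<longrightarrow> j = k)"
      proof (rule exI[of _ C0], intro conjI)
        show "C0 \<subseteq> {v \<in> ?Y. ?T v = ?T k \<and> \<phi> v \<inter> G \<noteq> {}}" using C0(4) unfolding Nb_def by blast
        show "\<forall>j\<in>C0. j \<le> s \<longrightarrow> j = k"
        proof (intro ballI impI)
          fix j assume "j \<in> C0" "j \<le> s"
          then have "j \<in> Nb" using C0(4) by blast
          then show "j = k" using \<open>j \<le> s\<close> unfolding Nb_def by blast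
        qed
      qed (use C0 in blast)+
      define C where "C = Cs s (st s)"
      have C: "openin Y C \<and> closedin Y C \<and> k \<in> C \<and>
        C \<subseteq> {v \<in> ?Y. ?T v = ?T k \<and> \<phi> v \<inter> G \<noteq> {}} \<and> (\<forall>j\<in>C. j \<le> s \<longrightarrow> j = k)"
        unfolding C_def Cs_def using someI_ex[OF exC] unfolding k_def G_def by simp
      have e: "st (Suc s) = ((\<lambda>v. if v \<in> C then G else ?T v), ?x)"
        unfolding stS step_def C_def G_def using True k_def by simp
      have CY: "C \<subseteq> ?Y" using C openin_subset by blast
      have "Inv (Suc s)"
        unfolding Inv_def e fst_conv snd_conv
      proof (intro conjI ballI impI)
        fix w assume w: "w \<in> ?Y"
        show "openin Z (if w \<in> C then G else ?T w)" using Gopen I1[OF w] by auto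
        show "\<phi> w \<inter> (if w \<in> C then G else ?T w) \<noteq> {}" using C I1[OF w] by auto
        show "\<exists>Nb. openin Y Nb \<and> w \<in> Nb \<and> (\<forall>v\<in>Nb. (if v \<in> C then G else ?T v) = (if w \<in> C then G else ?T w))"
        proof (cases "w \<in> C")
          case True then show ?thesis using C by (intro exI[of _ C]) auto
        next
          case False
          obtain Nb' where Nb': "openin Y Nb'" "w \<in> Nb'" "\<forall>u\<in>Nb'. ?T u = ?T w" using I2 w by blast
          show ?thesis
          proof (rule exI[of _ "Nb' - C"], intro conjI ballI)
            show "openin Y (Nb' - C)" using Nb'(1) C by (simp add: openin_diff)
            show "w \<in> Nb' - C" using Nb'(2) False by blast
            fix v assume "v \<in> Nb' - C"
            then show "(if v \<in> C then G else ?T v) = (if w \<in> C then G else ?T w)" using Nb'(3) False by simp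
          qed
        qed
      next
        fix j assume j: "j \<in> ?Y" "j < Suc s"
        show "?x j \<in> \<phi> j \<inter> (if j \<in> C then G else ?T j)"
        proof (cases "j \<in> C")
          case True
          then have "j = k" using C j by auto
          then show ?thesis using xk xkG True by auto
        next
          case False then show ?thesis using xin j by auto
        qed
      qed
      moreover have "\<forall>w\<in>?Y. fst (st (Suc s)) w \<subseteq> fst (st s) w"
        unfolding e using C G by auto
      moreover have "\<exists>C. openin Y C \<and> k \<in> C \<and> (\<forall>j\<in>C. j \<le> s \<longrightarrow> j = k) \<and>
         (\<forall>v\<in>C. fst (st (Suc s)) v \<subseteq> bas (snd (st (Suc s)) k) i)"
        apply (rule exI[of _ C]) unfolding e using C G by auto
      ultimately show ?thesis unfolding k_def i_def by blast
    qed
  qed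
  have Inv: "Inv s" for s
    by (induction s) (use Inv0 stepI in auto)
  have mono: "fst (st s') w \<subseteq> fst (st s) w" if "s \<le> s'" "w \<in> ?Y" for s s' w
    using that(1)
  proof (induction s' rule: dec_induct)
    case base then show ?case by simp
  next
    case (step n) then show ?case using stepI[OF Inv[of n]] that(2) by blast
  qed
  have xstable: "snd (st s') j = snd (st (Suc j)) j" if "Suc j \<le> s'" for j s'
    using that
  proof (induction s' rule: dec_induct)
    case base show ?case by simp
  next
    case (step n)
    have "snd (st (Suc n)) j = xupd n (st n) j"
      unfolding stS step_def by simp
    also have "\<dots> = snd (st n) j" unfolding xupd_def using step by auto
    finally show ?case using step by simp
  qed
  define f where "f j = snd (st (Suc j)) j" for j
  have fphi: "f j \<in> \<phi> j \<inter> fst (st (Suc j)) j" if "j \<in> ?Y" for j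
    using Inv[of "Suc j"] that unfolding Inv_def f_def by blast
  have "continuous_map Y Z f"
    unfolding continuous_map_def
  proof (intro conjI allI impI)
    show "f \<in> ?Y \<rightarrow> topspace Z" using fphi sub by blast
    fix U assume U: "openin Z U"
    show "openin Y {y \<in> ?Y. f y \<in> U}"
    proof (subst openin_subopen, intro ballI)
      fix k assume k: "k \<in> {y \<in> ?Y. f y \<in> U}"
      have fkZ: "f k \<in> topspace Z" using fphi sub k by blast
      obtain i where i: "bas (f k) i \<subseteq> U" using bas[OF fkZ] U k by blast
      define s where "s = prod_encode (k, i)"
      have ks: "k \<le> s" unfolding s_def by (rule le_prod_encode_1)
      have dec: "prod_decode s = (k, i)" unfolding s_def by simp
      obtain C where C: "openin Y C" "k \<in> C" "\<forall>j\<in>C. j \<le> s \<longrightarrow> j = k"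
          "\<forall>v\<in>C. fst (st (Suc s)) v \<subseteq> bas (snd (st (Suc s)) k) i"
        using stepI[OF Inv[of s]] k dec by auto
      have xk: "snd (st (Suc s)) k = f k"
        using xstable[of k "Suc s"] ks unfolding f_def by simp
      have "C \<subseteq> {y \<in> ?Y. f y \<in> U}"
      proof
        fix j assume j: "j \<in> C"
        have jY: "j \<in> ?Y" using C(1) j openin_subset by blast
        show "j \<in> {y \<in> ?Y. f y \<in> U}"
        proof (cases "j \<le> s")
          case True then show ?thesis using C j k by auto
        next
          case False
          have "f j \<in> fst (st (Suc j)) j" using fphi jY by blast
          also have "\<dots> \<subseteq> fst (st (Suc s)) j" using mono False jY by simp
          also have "\<dots> \<subseteq> bas (f k) i" using C(4) j xk by simp
          finally show ?thesis using i jY by blast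
        qed
      qed
      then show "\<exists>T. openin Y T \<and> k \<in> T \<and> T \<subseteq> {y \<in> ?Y. f y \<in> U}" using C by blast
    qed
  qed
  then show ?thesis using fphi by blast
qed


lemma prod_open_Xp:
  assumes U: "openin (prod_topology E X) U"
  shows "openin (prod_topology E (Xp X)) U"
  unfolding openin_prod_topology_alt
proof (intro allI impI)
  fix x y assume xy: "(x,y) \<in> U"
  obtain U' V where UV: "openin E U'" "openin X V" "x \<in> U'" "y \<in> V" "U' \<times> V \<subseteq> U"
    using U[unfolded openin_prod_topology_alt, rule_format, OF xy] by (elim exE conjE)
  have "openin (Xp X) V" using UV(2) by (rule openin_imp_Xp)
  then show "\<exists>U' V. openin E U' \<and> openin (Xp X) V \<and> x \<in> U' \<and> y \<in> V \<and> U' \<times> V \<subseteq> U"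
    using UV(1,3,4,5) by blast
qed

theorem mainTheorem15:
  fixes X :: "'a::linorder topology" and E :: "'b topology"
  assumes "GO_space X"
    and "metrizable_space E" and "countable (topspace E)"
  shows "C_selective (prod_topology E X)"
  unfolding C_selective_def Y_selective_def
proof (intro allI impI)
  fix Y :: "nat topology" and \<phi> :: "nat \<Rightarrow> ('b \<times> 'a) set"
  assume Y: "countable (topspace Y) \<and> regular_space Y \<and> t1_space Y"
    and L: "lsc_closed_valued Y (prod_topology E X) \<phi>"
  have GO: "GO_space X" and cE: "countable (topspace E)" by fact+
  have cY: "countable (topspace Y)" and reg: "regular_space Y" and t1: "t1_space Y" using Y by blast+
  have ne: "\<And>y. y \<in> topspace Y \<Longrightarrow> \<phi> y \<noteq> {}"
    and cl: "\<And>y. y \<in> topspace Y \<Longrightarrow> closedin (prod_topology E X) (\<phi> y)"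
    and lsc: "\<And>U. openin (prod_topology E X) U \<Longrightarrow> openin Y {y\<in>topspace Y. \<phi> y \<inter> U \<noteq> {}}"
    using L unfolding lsc_closed_valued_def by blast+
  have sub: "\<phi> y \<subseteq> topspace (prod_topology E (Xp X))" if "y \<in> topspace Y" for y
    using closedin_subset[OF cl[OF that]] by simp
  have fcE: "first_countable E" using assms(2) by (rule metrizable_imp_first_countable)
  have fcX: "first_countable (Xp X)" using GO by (rule fc_Xp)
  obtain f where f: "continuous_map Y (prod_topology E (Xp X)) f" "\<forall>y\<in>topspace Y. f y \<in> \<phi> y"
  proof -
    have "\<exists>f. continuous_map Y (prod_topology E (Xp X)) f \<and> (\<forall>y\<in>topspace Y. f y \<in> \<phi> y)"
    proof (rule FC)
      show "\<And>Nb k. openin Y Nb \<Longrightarrow> k \<in> Nb \<Longrightarrow> \<exists>C. openin Y C \<and> closedin Y C \<and> k \<in> C \<and> C \<subseteq> Nb"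
        using countable_zd[OF cY reg t1] by blast
      show "t1_space Y" by (rule t1)
      show "\<And>z. z \<in> topspace (prod_topology E (Xp X)) \<Longrightarrow> \<exists>b. (\<forall>i::nat. openin (prod_topology E (Xp X)) (b i) \<and> z \<in> b i) \<and> (\<forall>U. openin (prod_topology E (Xp X)) U \<and> z \<in> U \<longrightarrow> (\<exists>i. b i \<subseteq> U))"
        using fc_prod_seq[OF fcE fcX] by blast
      show "\<And>y. y \<in> topspace Y \<Longrightarrow> \<phi> y \<noteq> {}" by (rule ne)
      show "\<And>y. y \<in> topspace Y \<Longrightarrow> \<phi> y \<subseteq> topspace (prod_topology E (Xp X))" by (rule sub)
      show "\<And>U. openin (prod_topology E (Xp X)) U \<Longrightarrow> openin Y {y \<in> topspace Y. \<phi> y \<inter> U \<noteq> {}}"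
        using lsc_Xp[where \<phi>=\<phi>, OF GO cE cY cl lsc] by blast
    qed
    then show ?thesis using that by blast
  qed
  have "continuous_map Y (prod_topology E X) f"
    unfolding continuous_map_def
  proof (intro conjI allI impI)
    show "f \<in> topspace Y \<rightarrow> topspace (prod_topology E X)"
      using f(1) unfolding continuous_map_def by simp
    fix U assume "openin (prod_topology E X) U"
    then have "openin (prod_topology E (Xp X)) U" by (rule prod_open_Xp)
    then show "openin Y {x \<in> topspace Y. f x \<in> U}" by (rule openin_continuous_map_preimage[OF f(1)])
  qed
  then show "\<exists>f. continuous_map Y (prod_topology E X) f \<and> (\<forall>y\<in>topspace Y. f y \<in> \<phi> y)"
    using f(2) by blast
qed

end
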